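(* Fix $t>0$, $\alpha\in(0,1/2)$ and $\beta>e^2t^{1/(d+1)}$. Then there are finite positive constants $\theta_0,C_1,C_2$ such that for every $\theta\ge\theta_0$, $$P\{\exists\, y<x \text{ in }\mathbb R^d:\ |y|_\infty\ge\theta,\ |x-y|_\infty\ge\alpha|y|_\infty,\ \mathbf H((y,0),(x,t))\ge\beta|x-y|_\infty^{d/(d+1)}\}\le C_1\exp(-C_2\theta^{d/(d+1)}).$$
   Context: Order: for $x,y\in\mathbb R^\nu$, $x<y$ iff $x_i<y_i$ for all $i$; $|x|_\infty=\max_i|x_i|$; $d\ge2$. A rate-one homogeneous Poisson point process on $\mathbb R^d\times(0,\infty)$ is given with law $P$. For $y\le x$ in $\mathbb R^d$ and $t>0$, $\mathbf H((y,0),(x,t))$ is the maximal $m\ge0$ such that there are Poisson points $p^1<\dots<p^m$ (strict coordinatewise order in $\mathbb R^{d+1}$) all in $\{(\eta,s):y<\eta\le x,\ 0<s\le t\}$. *)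

theory Defs
  imports "HOL-Probability.Probability"
begin

definition sup_norm :: "real ^ 'd::finite \<Rightarrow> real" where
  "sup_norm x = Max (range (\<lambda>i. \<bar>x $ i\<bar>))"

definition sp_less :: "real ^ 'd::finite \<Rightarrow> real ^ 'd \<Rightarrow> bool" where
  "sp_less x y \<longleftrightarrow> (\<forall>i. x $ i < y $ i)"

definition st_less :: "(real ^ 'd::finite) \<times> real \<Rightarrow> (real ^ 'd) \<times> real \<Rightarrow> bool" where
  "st_less p q \<longleftrightarrow> sp_less (fst p) (fst q) \<and> snd p < snd q"

text \<open>Rate-one homogeneous Poisson point process on R^d x (0,infinity), realised as a
  random locally finite point set Xi on the probability space M.\<close>
definition poisson_process ::
  "'w measure \<Rightarrow> ('w \<Rightarrow> ((real ^ 'd::finite) \<times> real) set) \<Rightarrow> bool" where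
  "poisson_process M Xi \<longleftrightarrow>
     prob_space M \<and>
     (\<forall>\<omega>\<in>space M. Xi \<omega> \<subseteq> UNIV \<times> {0<..}) \<and>
     (\<forall>A. A \<in> sets borel \<and> bounded A \<and> A \<subseteq> UNIV \<times> {0<..} \<longrightarrow>
        (\<forall>\<omega>\<in>space M. finite (Xi \<omega> \<inter> A)) \<and>
        (\<forall>k::nat. {\<omega>\<in>space M. card (Xi \<omega> \<inter> A) = k} \<in> sets M \<and>
            measure M {\<omega>\<in>space M. card (Xi \<omega> \<inter> A) = k}
              = measure lborel A ^ k / fact k * exp (- measure lborel A))) \<and>
     (\<forall>(I::nat set) A. finite I \<and> disjoint_family_on A I \<and>
        (\<forall>i\<in>I. A i \<in> sets borel \<and> bounded (A i) \<and> A i \<subseteq> UNIV \<times> {0<..}) \<longrightarrow>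
        prob_space.indep_vars M (\<lambda>_. count_space UNIV)
          (\<lambda>i \<omega>. card (Xi \<omega> \<inter> A i)) I)"

text \<open>Last-passage value H((y,0),(x,t)): maximal length of a strictly increasing chain
  of Poisson points in {(eta,s). y < eta <= x, 0 < s <= t}.\<close>
definition Hpass ::
  "((real ^ 'd::finite) \<times> real) set \<Rightarrow> real ^ 'd \<Rightarrow> real ^ 'd \<Rightarrow> real \<Rightarrow> nat" where
  "Hpass P y x t = Max {length ps | ps. sorted_wrt st_less ps \<and>
      set ps \<subseteq> P \<inter> {(\<eta>, s). sp_less y \<eta> \<and> \<eta> \<le> x \<and> 0 < s \<and> s \<le> t}}"

end

theory Submission imports Defs "HOL-Library.Cardinality" "HOL-Real_Asymp.Real_Asymp" begin

definition brick :: "real^'d::finite \<Rightarrow> real^'d \<Rightarrow> real \<Rightarrow> real \<Rightarrow> ((real^'d) \<times> real) set" where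
  "brick l u l0 u0 = {p. (\<forall>i. l$i < fst p $ i \<and> fst p $ i \<le> u$i) \<and> l0 < snd p \<and> snd p \<le> u0}"

lemma brick_borel: "brick (l::real^'d::finite) u l0 u0 \<in> sets borel"
proof -
  have o1: "open {p::(real^'d::finite)\<times>real. c < fst p $ i}" for c i
    by (intro open_Collect_less continuous_intros)
  have c1: "closed {p::(real^'d::finite)\<times>real. fst p $ i \<le> c}" for c i
    by (intro closed_Collect_le continuous_intros)
  have o2: "open {p::(real^'d::finite)\<times>real. c < snd p}" for c
    by (intro open_Collect_less continuous_intros)
  have c2: "closed {p::(real^'d::finite)\<times>real. snd p \<le> c}" for c
    by (intro closed_Collect_le continuous_intros)
  have eq: "brick l u l0 u0 = (\<Inter>i\<in>UNIV. {p. l$i < fst p $ i} \<inter> {p. fst p $ i \<le> u$i})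
     \<inter> {p. l0 < snd p} \<inter> {p. snd p \<le> u0}"
    by (auto simp: brick_def)
  show ?thesis unfolding eq
  proof (intro sets.Int)
    show "(\<Inter>i\<in>UNIV. {p::(real^'d)\<times>real. l$i < fst p $ i} \<inter> {p. fst p $ i \<le> u$i}) \<in> sets borel"
    proof (rule sets.finite_INT)
      fix i show "{p::(real^'d)\<times>real. l$i < fst p $ i} \<inter> {p::(real^'d)\<times>real. fst p $ i \<le> u$i} \<in> sets borel"
        by (rule sets.Int[OF borel_open[OF o1] borel_closed[OF c1]])
    qed auto
  qed (rule borel_open[OF o2], rule borel_closed[OF c2])
qed

lemma brick_sub_cbox: "brick l u l0 u0 \<subseteq> cbox (l, l0) (u, u0)"
  by (auto simp: brick_def cbox_Pair_eq mem_box_cart less_imp_le)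

lemma brick_bounded: "bounded (brick l u l0 u0)"
  by (rule bounded_subset[OF bounded_cbox brick_sub_cbox])

lemma brick_pos: "l0 \<ge> 0 \<Longrightarrow> brick l u l0 u0 \<subseteq> UNIV \<times> {0<..}"
  by (auto simp: brick_def)

lemma brick_measure:
  assumes "\<forall>i. l$i \<le> u$i" "l0 \<le> u0"
  shows "measure lborel (brick l u l0 u0) \<le> (\<Prod>i\<in>UNIV. u$i - l$i) * (u0 - l0)"
proof -
  have "measure lborel (brick l u l0 u0) \<le> measure lborel (cbox (l, l0) (u, u0))"
    by (rule measure_mono_fmeasurable[OF brick_sub_cbox]) (use brick_borel in auto)
  also have "\<dots> = measure lborel (cbox l u) * measure lborel (cbox l0 u0)"
    by (rule content_Pair)
  also have "\<dots> = (\<Prod>i\<in>UNIV. u$i - l$i) * (u0 - l0)"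
  proof -
    have ne: "l \<in> cbox l u" using assms by (simp add: mem_box_cart)
    show ?thesis
      by (subst content_cbox_cart) (use ne assms in auto)
  qed
  finally show ?thesis .
qed

definition good_set :: "((real^'d::finite) \<times> real) set \<Rightarrow> bool" where
  "good_set A \<longleftrightarrow> A \<in> sets borel \<and> bounded A \<and> A \<subseteq> UNIV \<times> {0<..}"

lemma brick_good: "l0 \<ge> 0 \<Longrightarrow> good_set (brick l u l0 u0)"
  by (simp add: good_set_def brick_borel brick_bounded brick_pos)

lemma pp_prob_space: "poisson_process M Xi \<Longrightarrow> prob_space M"
  by (simp add: poisson_process_def)

lemma pp_finite:
  "poisson_process M Xi \<Longrightarrow> good_set A \<Longrightarrow> \<omega> \<in> space M \<Longrightarrow> finite (Xi \<omega> \<inter> A)"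
  by (simp add: poisson_process_def good_set_def)

lemma pp_eq:
  "poisson_process M Xi \<Longrightarrow> good_set A \<Longrightarrow>
    {\<omega>\<in>space M. card (Xi \<omega> \<inter> A) = k} \<in> sets M \<and>
    measure M {\<omega>\<in>space M. card (Xi \<omega> \<inter> A) = k} = measure lborel A ^ k / fact k * exp (- measure lborel A)"
  unfolding poisson_process_def good_set_def by blast

lemma poisson_tail:
  fixes v :: real assumes "v \<ge> 0"
  shows "1 - (\<Sum>j<m. v ^ j / fact j * exp (- v)) \<le> v ^ m"
proof -
  obtain s where s: "\<bar>s\<bar> \<le> \<bar>v\<bar>" "exp v = (\<Sum>j<m. v ^ j / fact j) + exp s / fact m * v ^ m"
    using Maclaurin_exp_le by blast
  have "1 = exp v * exp (-v)" by (simp add: exp_minus_inverse)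
  also have "\<dots> = (\<Sum>j<m. v ^ j / fact j) * exp (- v) + exp s * exp (- v) / fact m * v ^ m"
    by (simp add: s(2) algebra_simps)
  also have "\<dots> = (\<Sum>j<m. v ^ j / fact j * exp (- v)) + exp (s - v) / fact m * v ^ m"
    by (simp add: sum_distrib_right exp_diff exp_minus divide_inverse)
  finally have "1 - (\<Sum>j<m. v ^ j / fact j * exp (- v)) = exp (s - v) / fact m * v ^ m" by simp
  also have "\<dots> \<le> 1 * v ^ m"
  proof (rule mult_right_mono)
    have "exp (s - v) \<le> 1" using s(1) assms by simp
    moreover have "(1::real) \<le> fact m" by simp
    ultimately show "exp (s - v) / fact m \<le> 1"
      by (meson divide_le_eq_1 exp_gt_zero fact_gt_zero less_le_trans linorder_not_le order_le_less_trans)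
  qed (use assms in simp)
  finally show ?thesis by simp
qed

lemma disj_level: "disjoint_family_on (\<lambda>j. {x\<in>S. f x = j}) I"
  unfolding disjoint_family_on_def by fastforce

lemma pp_ge:
  assumes pp: "poisson_process M Xi" and g: "good_set A"
  shows "{\<omega>\<in>space M. m \<le> card (Xi \<omega> \<inter> A)} \<in> sets M"
    "measure M {\<omega>\<in>space M. m \<le> card (Xi \<omega> \<inter> A)} \<le> measure lborel A ^ m"
proof -
  interpret prob_space M using pp by (rule pp_prob_space)
  let ?E = "\<lambda>j. {\<omega>\<in>space M. card (Xi \<omega> \<inter> A) = j}"
  have ev: "?E j \<in> sets M" for j using pp_eq[OF pp g] by blast
  have eq: "{\<omega>\<in>space M. m \<le> card (Xi \<omega> \<inter> A)} = space M - (\<Union>j<m. ?E j)"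
    by auto
  show "{\<omega>\<in>space M. m \<le> card (Xi \<omega> \<inter> A)} \<in> sets M"
    unfolding eq using ev by auto
  have U: "(\<Union>j<m. ?E j) \<in> sets M"
    by (rule sets.finite_UN) (use ev in auto)
  have m1: "measure M (space M - (\<Union>j<m. ?E j)) = 1 - measure M (\<Union>j<m. ?E j)"
    by (rule prob_compl[OF U])
  have dj: "disjoint_family_on ?E {..<m}"
    by (rule disj_level)
  have m2: "measure M (\<Union>j<m. ?E j) = (\<Sum>j<m. measure M (?E j))"
    by (rule finite_measure_finite_Union[OF finite_lessThan _ dj]) (intro image_subsetI ev)
  have m3: "(\<Sum>j<m. measure M (?E j)) = (\<Sum>j<m. measure lborel A ^ j / fact j * exp (- measure lborel A))"
    using pp_eq[OF pp g] by (intro sum.cong) auto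
  have "measure M (space M - (\<Union>j<m. ?E j)) \<le> measure lborel A ^ m"
    unfolding m1 m2 m3 by (rule poisson_tail) simp
  then show "measure M {\<omega>\<in>space M. m \<le> card (Xi \<omega> \<inter> A)} \<le> measure lborel A ^ m"
    unfolding eq .
qed


lemma pp_indep:
  assumes pp: "poisson_process M Xi" and fin: "finite S" and ne: "S \<noteq> {}"
    and g: "\<forall>s\<in>S. good_set (C s)" and dj: "disjoint_family_on C S"
  shows "measure M (\<Inter>s\<in>S. {\<omega>\<in>space M. m s \<le> card (Xi \<omega> \<inter> C s)})
     = (\<Prod>s\<in>S. measure M {\<omega>\<in>space M. m s \<le> card (Xi \<omega> \<inter> C s)})"
proof -
  interpret prob_space M using pp by (rule pp_prob_space)
  obtain h where h: "bij_betw h {0..<card S} S"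
    using ex_bij_betw_nat_finite[OF fin] by blast
  let ?n = "card S"
  let ?A = "\<lambda>i. C (h i)"
  have hin: "h i \<in> S" if "i \<in> {0..<?n}" for i
    using h that by (auto simp: bij_betw_def)
  have hinj: "inj_on h {0..<?n}" using h by (auto simp: bij_betw_def)
  have dj2: "disjoint_family_on ?A {0..<?n}"
    unfolding disjoint_family_on_def
  proof (intro ballI impI)
    fix i j assume ij: "i \<in> {0..<?n}" "j \<in> {0..<?n}" "i \<noteq> j"
    then have "h i \<noteq> h j" using hinj by (meson inj_on_eq_iff)
    then show "C (h i) \<inter> C (h j) = {}"
      using dj hin[OF ij(1)] hin[OF ij(2)] unfolding disjoint_family_on_def by simp
  qed
  have g2: "\<forall>i\<in>{0..<?n}. ?A i \<in> sets borel \<and> bounded (?A i) \<and> ?A i \<subseteq> UNIV \<times> {0<..}"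
    using g hin unfolding good_set_def by simp
  have iv: "indep_vars (\<lambda>_. count_space UNIV) (\<lambda>i \<omega>. card (Xi \<omega> \<inter> ?A i)) {0..<?n}"
    using pp dj2 g2 unfolding poisson_process_def by simp
  then have isets: "indep_sets (\<lambda>i. {(\<lambda>\<omega>. card (Xi \<omega> \<inter> ?A i)) -` B \<inter> space M | B. B \<in> sets (count_space UNIV)}) {0..<?n}"
    by (simp add: indep_vars_def2)
  let ?E = "\<lambda>s. {\<omega>\<in>space M. m s \<le> card (Xi \<omega> \<inter> C s)}"
  have evs: "?E (h i) \<in> {(\<lambda>\<omega>. card (Xi \<omega> \<inter> ?A i)) -` B \<inter> space M | B. B \<in> sets (count_space UNIV)}" for i
    by (rule CollectI, rule exI[of _ "{m (h i)..}"]) auto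
  have "prob (\<Inter>i\<in>{0..<?n}. ?E (h i)) = (\<Prod>i\<in>{0..<?n}. prob (?E (h i)))"
    by (rule indep_setsD[OF isets]) (use ne fin evs in auto)
  moreover have "(\<Inter>i\<in>{0..<?n}. ?E (h i)) = (\<Inter>s\<in>S. ?E s)"
  proof -
    have "h ` {0..<?n} = S" using h by (simp add: bij_betw_def)
    note hS = this
    show ?thesis
    proof (intro equalityI subsetI)
      fix x assume x: "x \<in> (\<Inter>i\<in>{0..<?n}. ?E (h i))"
      show "x \<in> (\<Inter>s\<in>S. ?E s)"
      proof (rule INT_I)
        fix s assume "s \<in> S"
        then have "s \<in> h ` {0..<?n}" using hS by simp
        then obtain i where i: "i \<in> {0..<?n}" "s = h i" by (rule imageE)
        show "x \<in> ?E s" unfolding i(2) using x i(1) by (rule INT_D)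
      qed
    next
      fix x assume x: "x \<in> (\<Inter>s\<in>S. ?E s)"
      show "x \<in> (\<Inter>i\<in>{0..<?n}. ?E (h i))"
      proof (rule INT_I)
        fix i assume "i \<in> {0..<?n}"
        then have "h i \<in> S" by (rule hin)
        with x show "x \<in> ?E (h i)" by (rule INT_D)
      qed
    qed
  qed
  moreover have "(\<Prod>i\<in>{0..<?n}. prob (?E (h i))) = (\<Prod>s\<in>S. prob (?E s))"
    by (rule prod.reindex_bij_betw[OF h])
  ultimately show ?thesis by simp
qed

lemma cell1:
  fixes h z :: real assumes "h > 0" "0 < z"
  shows "real (nat (\<lceil>z/h\<rceil> - 1)) * h < z \<and> z \<le> real (nat (\<lceil>z/h\<rceil> - 1) + 1) * h"
proof -
  have pos: "z/h > 0" using assms by simp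
  then have "0 < real_of_int \<lceil>z/h\<rceil>" using le_of_int_ceiling[of "z/h"] by linarith
  then have "0 < \<lceil>z/h\<rceil>" by simp
  then have c1: "\<lceil>z/h\<rceil> \<ge> 1" by simp
  have e: "real (nat (\<lceil>z/h\<rceil> - 1)) = real_of_int \<lceil>z/h\<rceil> - 1" using c1 by simp
  have a: "real_of_int \<lceil>z/h\<rceil> - 1 < z/h" by linarith
  have b: "z/h \<le> real_of_int \<lceil>z/h\<rceil>" by (rule le_of_int_ceiling)
  have a2: "(real_of_int \<lceil>z/h\<rceil> - 1) * h < z" using a assms by (simp add: pos_less_divide_eq)
  have b2: "z \<le> real_of_int \<lceil>z/h\<rceil> * h" using iffD1[OF pos_divide_le_eq[OF assms(1)] b] .
  show ?thesis using a2 b2 by (simp add: e algebra_simps)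
qed

lemma cell2:
  fixes h z :: real assumes "h > 0" "real j * h < z" "z \<le> real (j+1) * h"
  shows "nat (\<lceil>z/h\<rceil> - 1) = j"
proof -
  have "real j < z/h" "z/h \<le> real j + 1" using assms by (simp_all add: field_simps)
  then have "\<lceil>z/h\<rceil> = int j + 1" by (simp add: ceiling_eq_iff)
  then show ?thesis by simp
qed

lemma cell3:
  fixes h z :: real assumes "h > 0" "0 < z" "z \<le> real k * h"
  shows "nat (\<lceil>z/h\<rceil> - 1) < k"
proof -
  have "z/h \<le> real k" using assms by (simp add: field_simps)
  then have c2: "\<lceil>z/h\<rceil> \<le> int k" by (simp add: ceiling_le_iff)
  moreover have c1: "\<lceil>z/h\<rceil> \<ge> 1"
  proof -
    have "0 < real_of_int \<lceil>z/h\<rceil>" using le_of_int_ceiling[of "z/h"] assms by (smt (verit) divide_pos_pos)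
    then have "0 < \<lceil>z/h\<rceil>" by simp
    then show ?thesis by simp
  qed
  ultimately show ?thesis using nat_less_iff[of "\<lceil>z/h\<rceil> - 1" k] by linarith
qed

lemma cell4:
  fixes h z z' :: real assumes "h > 0" "z \<le> z'"
  shows "nat (\<lceil>z/h\<rceil> - 1) \<le> nat (\<lceil>z'/h\<rceil> - 1)"
proof -
  have "z/h \<le> z'/h" using assms by (simp add: divide_right_mono)
  then have "\<lceil>z/h\<rceil> \<le> \<lceil>z'/h\<rceil>" by (rule ceiling_mono)
  then show ?thesis by simp
qed

lemma sorted_wrt_irrefl_distinct:
  assumes "sorted_wrt R xs" "\<And>x. \<not> R x x" shows "distinct xs"
  using assms by (induction xs) auto

definition SL :: "nat \<Rightarrow> nat list set" where
  "SL k = {xs. length xs = k \<and> set xs \<subseteq> {0..<k} \<and> sorted xs}"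

lemma SL_finite: "finite (SL k)"
proof -
  have "SL k \<subseteq> {xs. set xs \<subseteq> {0..<k} \<and> length xs = k}" by (auto simp: SL_def)
  moreover have "finite {xs. set xs \<subseteq> {0..<k::nat} \<and> length xs = k}"
    by (rule finite_lists_length_eq) simp
  ultimately show ?thesis by (rule finite_subset)
qed

lemma SL_card: "card (SL k) \<le> 4 ^ k"
proof -
  have inj: "inj_on mset (SL k)"
  proof (rule inj_onI)
    fix xs ys assume "xs \<in> SL k" "ys \<in> SL k" "mset xs = mset ys"
    then have a: "sorted xs" "sorted ys" "mset xs = mset ys" by (auto simp: SL_def)
    have "sort xs = ys" by (rule properties_for_sort) (use a in auto)
    moreover have "sort xs = xs" using a(1) by (simp add: sorted_sort_id)
    ultimately show "xs = ys" by simp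
  qed
  have sub: "mset ` SL k \<subseteq> multisets_of_size {0..<k} k"
    by (auto simp: SL_def multisets_of_size_def)
  have "card (SL k) = card (mset ` SL k)" using inj by (simp add: card_image)
  also have "\<dots> \<le> card (multisets_of_size {0..<k} k)"
    by (rule card_mono[OF finite_multisets_of_size sub]) simp
  also have "\<dots> = (k + k - 1) choose k" by (simp add: card_multisets_of_size)
  also have "\<dots> \<le> 2 ^ (k + k - 1)" by (rule binomial_le_pow2)
  also have "\<dots> \<le> 2 ^ (2 * k)" by (intro power_increasing) auto
  also have "\<dots> = 4 ^ k" by (simp add: power_mult)
  finally show ?thesis .
qed

definition Idx :: "nat \<Rightarrow> ('d option \<Rightarrow> nat) set" where
  "Idx k = PiE UNIV (\<lambda>_. {0..<k})"

definition Seqs :: "nat \<Rightarrow> ('d option \<Rightarrow> nat) list set" where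
  "Seqs k = {cs. length cs = k \<and> set cs \<subseteq> Idx k \<and> (\<forall>r. sorted (map (\<lambda>f. f r) cs))}"

lemma Idx_finite: "finite (Idx k :: ('d::finite option \<Rightarrow> nat) set)"
  unfolding Idx_def by (rule finite_PiE) auto

lemma Seqs_finite: "finite (Seqs k :: ('d::finite option \<Rightarrow> nat) list set)"
proof -
  have "Seqs k \<subseteq> {xs. set xs \<subseteq> (Idx k :: ('d option \<Rightarrow> nat) set) \<and> length xs = k}"
    by (auto simp: Seqs_def)
  moreover have "finite {xs. set xs \<subseteq> (Idx k :: ('d option \<Rightarrow> nat) set) \<and> length xs = k}"
    by (rule finite_lists_length_eq) (rule Idx_finite)
  ultimately show ?thesis by (rule finite_subset)
qed

lemma Seqs_card: "card (Seqs k :: ('d::finite option \<Rightarrow> nat) list set) \<le> (4 ^ k) ^ (CARD('d) + 1)"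
proof -
  let ?P = "PiE (UNIV :: 'd option set) (\<lambda>_. SL k)"
  let ?Phi = "\<lambda>cs::('d option \<Rightarrow> nat) list. (\<lambda>r. map (\<lambda>f. f r) cs)"
  have inj: "inj_on ?Phi (Seqs k)"
  proof (rule inj_onI)
    fix cs ds assume cs: "cs \<in> Seqs k" and ds: "ds \<in> Seqs k" and eq: "?Phi cs = ?Phi ds"
    have len: "length cs = length ds" using cs ds by (simp add: Seqs_def)
    show "cs = ds"
    proof (rule nth_equalityI[OF len])
      fix j assume j: "j < length cs"
      show "cs ! j = ds ! j"
      proof
        fix r
        have "map (\<lambda>f. f r) cs = map (\<lambda>f. f r) ds" using eq by meson
        then have "(map (\<lambda>f. f r) cs) ! j = (map (\<lambda>f. f r) ds) ! j" by simp
        then show "(cs ! j) r = (ds ! j) r" using j len by simp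
      qed
    qed
  qed
  have sub: "?Phi ` Seqs k \<subseteq> ?P"
  proof
    fix x assume "x \<in> ?Phi ` Seqs k"
    then obtain cs where cs: "cs \<in> Seqs k" "x = ?Phi cs" by blast
    have "map (\<lambda>f. f r) cs \<in> SL k" for r
    proof -
      have "set (map (\<lambda>f. f r) cs) \<subseteq> {0..<k}"
      proof
        fix n assume "n \<in> set (map (\<lambda>f. f r) cs)"
        then obtain f where f: "f \<in> set cs" "n = f r" by auto
        then have "f \<in> Idx k" using cs(1) by (auto simp: Seqs_def)
        then show "n \<in> {0..<k}" using f(2) by (auto simp: Idx_def PiE_iff)
      qed
      then show ?thesis using cs(1) by (simp add: SL_def Seqs_def)
    qed
    then show "x \<in> ?P" using cs(2) by (simp add: PiE_iff)
  qed
  have "card (Seqs k :: ('d option \<Rightarrow> nat) list set) = card (?Phi ` Seqs k)" using inj by (simp add: card_image)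
  also have "\<dots> \<le> card ?P" by (rule card_mono[OF _ sub]) (simp add: finite_PiE SL_finite)
  also have "\<dots> = card (SL k) ^ CARD('d option)" by (simp add: card_PiE)
  also have "\<dots> = card (SL k) ^ (CARD('d) + 1)" by (simp add: card_UNIV_option)
  also have "\<dots> \<le> (4 ^ k) ^ (CARD('d) + 1)" by (intro power_mono SL_card) simp
  finally show ?thesis .
qed

definition cellidx :: "real^'d::finite \<Rightarrow> real \<Rightarrow> real \<Rightarrow> (real^'d) \<times> real \<Rightarrow> 'd option \<Rightarrow> nat" where
  "cellidx a h \<tau> p r = (case r of Some i \<Rightarrow> nat (\<lceil>(fst p $ i - a $ i) / h\<rceil> - 1)
                                | None \<Rightarrow> nat (\<lceil>snd p / \<tau>\<rceil> - 1))"

definition cell :: "real^'d::finite \<Rightarrow> real \<Rightarrow> real \<Rightarrow> ('d option \<Rightarrow> nat) \<Rightarrow> ((real^'d) \<times> real) set" where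
  "cell a h \<tau> f = brick (\<chi> i. a$i + real (f (Some i)) * h) (\<chi> i. a$i + real (f (Some i) + 1) * h)
      (real (f None) * \<tau>) (real (f None + 1) * \<tau>)"

lemma cell_mem:
  "p \<in> cell a h \<tau> f \<longleftrightarrow>
     (\<forall>i. real (f (Some i)) * h < fst p $ i - a $ i \<and> fst p $ i - a $ i \<le> real (f (Some i) + 1) * h) \<and>
     real (f None) * \<tau> < snd p \<and> snd p \<le> real (f None + 1) * \<tau>"
  unfolding cell_def brick_def by (simp add: algebra_simps)

lemma cellidx_cell:
  assumes "h > 0" "\<tau> > 0" "p \<in> cell a h \<tau> f"
  shows "cellidx a h \<tau> p = f"
proof
  fix r show "cellidx a h \<tau> p r = f r"
  proof (cases r)
    case None
    then show ?thesis using assms cell2[of \<tau> "f None" "snd p"] by (simp add: cellidx_def cell_mem)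
  next
    case (Some i)
    then show ?thesis using assms cell2[of h "f (Some i)" "fst p $ i - a $ i"] by (simp add: cellidx_def cell_mem)
  qed
qed

lemma cell_disj:
  assumes "h > 0" "\<tau> > 0"
  shows "disjoint_family_on (cell a h \<tau>) S"
  unfolding disjoint_family_on_def
proof (intro ballI impI)
  fix f g assume "f \<in> S" "g \<in> S" "f \<noteq> g"
  show "cell a h \<tau> f \<inter> cell a h \<tau> g = {}"
  proof (rule ccontr)
    assume "cell a h \<tau> f \<inter> cell a h \<tau> g \<noteq> {}"
    then obtain p where "p \<in> cell a h \<tau> f" "p \<in> cell a h \<tau> g" by blast
    then have "f = cellidx a h \<tau> p" "g = cellidx a h \<tau> p" using cellidx_cell assms by metis+
    then show False using \<open>f \<noteq> g\<close> by simp
  qed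
qed

lemma box_cell:
  assumes K: "K > 0" and t: "t > 0" and k: "k \<ge> 1"
    and p: "p \<in> brick a (\<chi> i. a$i + K) 0 t"
  shows "cellidx a (K / real k) (t / real k) p \<in> Idx k \<and> p \<in> cell a (K / real k) (t / real k) (cellidx a (K / real k) (t / real k) p)"
proof -
  let ?h = "K / real k" and ?\<tau> = "t / real k"
  have h: "?h > 0" and \<tau>: "?\<tau> > 0" using K t k by auto
  have kh: "real k * ?h = K" and kt: "real k * ?\<tau> = t" using k by auto
  have pall: "\<forall>i. a$i < fst p $ i \<and> fst p $ i \<le> a$i + K" using p by (simp add: brick_def)
  have pi: "0 < fst p $ i - a $ i" "fst p $ i - a $ i \<le> real k * ?h" for i
    using pall[rule_format, of i] kh by simp_all
  have ps: "0 < snd p" "snd p \<le> real k * ?\<tau>" using p kt by (auto simp: brick_def)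
  have "cellidx a ?h ?\<tau> p \<in> Idx k"
    unfolding Idx_def
  proof (rule PiE_I)
    fix r show "cellidx a ?h ?\<tau> p r \<in> {0..<k}"
    proof (cases r)
      case None
      then show ?thesis using cell3[OF \<tau> ps(1) ps(2)] by (simp add: cellidx_def)
    next
      case (Some i)
      then show ?thesis using cell3[OF h pi(1) pi(2)] by (simp add: cellidx_def)
    qed
  qed simp
  moreover have "p \<in> cell a ?h ?\<tau> (cellidx a ?h ?\<tau> p)"
    unfolding cell_mem cellidx_def using cell1[OF h pi(1)] cell1[OF \<tau> ps(1)] by simp
  ultimately show ?thesis by blast
qed

lemma cellidx_mono:
  assumes "h > 0" "\<tau> > 0" "st_less p q"
  shows "cellidx a h \<tau> p r \<le> cellidx a h \<tau> q r"
proof (cases r)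
  case None
  have "snd p \<le> snd q" using assms(3) by (simp add: st_less_def)
  then show ?thesis using None cell4[OF assms(2)] by (simp add: cellidx_def)
next
  case (Some i)
  have "fst p $ i - a $ i \<le> fst q $ i - a $ i" using assms(3) by (simp add: st_less_def sp_less_def less_imp_le)
  then show ?thesis using Some cell4[OF assms(1)] by (simp add: cellidx_def)
qed

lemma cell_good: "\<tau> > 0 \<Longrightarrow> good_set (cell a h \<tau> f)"
  unfolding cell_def by (rule brick_good) simp

lemma cell_measure:
  fixes a :: "real^'d::finite"
  assumes "h > 0" "\<tau> > 0"
  shows "measure lborel (cell a h \<tau> f) \<le> h ^ CARD('d) * \<tau>"
proof -
  have "measure lborel (cell a h \<tau> f) \<le>
     (\<Prod>i\<in>(UNIV::'d set). (\<chi> i. a$i + real (f (Some i) + 1) * h) $ i - (\<chi> i. a$i + real (f (Some i)) * h) $ i)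
      * (real (f None + 1) * \<tau> - real (f None) * \<tau>)"
    unfolding cell_def using assms by (intro brick_measure) (auto simp: algebra_simps)
  also have "\<dots> = h ^ CARD('d) * \<tau>" by (simp add: algebra_simps)
  finally show ?thesis .
qed

lemma count_list_map_filter: "count_list (map g xs) f = length (filter (\<lambda>p. g p = f) xs)"
  by (induction xs) auto

lemma chain_event_bound:
  fixes M :: "'w measure" and Xi :: "'w \<Rightarrow> ((real ^ 'd::finite) \<times> real) set"
    and a :: "real^'d"
  assumes pp: "poisson_process M Xi" and K: "K > 0" and k: "k \<ge> 1" and t: "t > 0"
  shows "\<exists>F\<in>sets M. {\<omega>\<in>space M. \<exists>ps. length ps = k \<and> sorted_wrt st_less ps \<and>
            set ps \<subseteq> Xi \<omega> \<inter> brick a (\<chi> i. a$i + K) 0 t} \<subseteq> F \<and>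
         measure M F \<le> (4 ^ (CARD('d) + 1) * K ^ CARD('d) * t / real k ^ (CARD('d) + 1)) ^ k"
proof -
  interpret prob_space M using pp by (rule pp_prob_space)
  define h where "h = K / real k"
  define \<tau> where "\<tau> = t / real k"
  define v where "v = h ^ CARD('d) * \<tau>"
  have h: "h > 0" and \<tau>: "\<tau> > 0" using K t k by (auto simp: h_def \<tau>_def)
  have v0: "v \<ge> 0" using h \<tau> by (simp add: v_def)
  define G where "G cs = (\<Inter>f\<in>set cs. {\<omega>\<in>space M. count_list cs f \<le> card (Xi \<omega> \<inter> cell a h \<tau> f)})" for cs
  define F where "F = (\<Union>cs\<in>(Seqs k :: ('d option \<Rightarrow> nat) list set). G cs)"
  have ne: "set cs \<noteq> {}" if "cs \<in> Seqs k" for cs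
    using that k by (auto simp: Seqs_def)
  have Gm: "G cs \<in> sets M" if "cs \<in> Seqs k" for cs
    unfolding G_def
    by (rule sets.finite_INT) (use ne[OF that] pp_ge(1)[OF pp cell_good[OF \<tau>]] in auto)
  have Fm: "F \<in> sets M"
    unfolding F_def by (rule sets.finite_UN) (use Gm Seqs_finite in auto)
  have Gb: "measure M (G cs) \<le> v ^ k" if cs: "cs \<in> Seqs k" for cs
  proof -
    have "measure M (G cs) = (\<Prod>f\<in>set cs. measure M {\<omega>\<in>space M. count_list cs f \<le> card (Xi \<omega> \<inter> cell a h \<tau> f)})"
      unfolding G_def
      by (rule pp_indep[OF pp finite_set ne[OF cs]]) (use cell_good[OF \<tau>] cell_disj[OF h \<tau>] in auto)
    also have "\<dots> \<le> (\<Prod>f\<in>set cs. v ^ count_list cs f)"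
    proof (rule prod_mono)
      fix f assume "f \<in> set cs"
      have "measure M {\<omega>\<in>space M. count_list cs f \<le> card (Xi \<omega> \<inter> cell a h \<tau> f)}
          \<le> measure lborel (cell a h \<tau> f) ^ count_list cs f"
        by (rule pp_ge(2)[OF pp cell_good[OF \<tau>]])
      also have "\<dots> \<le> v ^ count_list cs f"
        unfolding v_def by (intro power_mono cell_measure h \<tau>) simp
      finally show "0 \<le> measure M {\<omega>\<in>space M. count_list cs f \<le> card (Xi \<omega> \<inter> cell a h \<tau> f)} \<and>
          measure M {\<omega>\<in>space M. count_list cs f \<le> card (Xi \<omega> \<inter> cell a h \<tau> f)} \<le> v ^ count_list cs f"
        by simp
    qed
    also have "\<dots> = v ^ (\<Sum>f\<in>set cs. count_list cs f)" by (simp add: power_sum)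
    also have "(\<Sum>f\<in>set cs. count_list cs f) = k"
      using sum_count_set[of cs "set cs"] cs by (simp add: Seqs_def)
    finally show ?thesis .
  qed
  have "measure M F \<le> (\<Sum>cs\<in>(Seqs k :: ('d option \<Rightarrow> nat) list set). measure M (G cs))"
    unfolding F_def by (rule finite_measure_subadditive_finite) (use Seqs_finite Gm in auto)
  also have "\<dots> \<le> (\<Sum>cs\<in>(Seqs k :: ('d option \<Rightarrow> nat) list set). v ^ k)"
    by (rule sum_mono) (rule Gb)
  also have "\<dots> = real (card (Seqs k :: ('d option \<Rightarrow> nat) list set)) * v ^ k" by simp
  also have "\<dots> \<le> real ((4 ^ k) ^ (CARD('d) + 1)) * v ^ k"
  proof (intro mult_right_mono zero_le_power v0)
    have sc: "card (Seqs k :: ('d option \<Rightarrow> nat) list set) \<le> (4^k)^(CARD('d)+1)" by (rule Seqs_card)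
    then show "real (card (Seqs k :: ('d option \<Rightarrow> nat) list set)) \<le> real ((4 ^ k) ^ (CARD('d) + 1))"
      by (simp only: of_nat_le_iff)
  qed
  also have "\<dots> = (4 ^ (CARD('d) + 1) * K ^ CARD('d) * t / real k ^ (CARD('d) + 1)) ^ k"
  proof -
    have ve: "v = K ^ CARD('d) * t / real k ^ (CARD('d) + 1)"
      by (simp add: v_def h_def \<tau>_def power_divide)
    have fe: "real ((4 ^ k) ^ (CARD('d) + 1)) = (4 ^ (CARD('d) + 1)) ^ k"
      by (simp add: power_mult[symmetric] mult.commute)
    have e3: "(4::real) ^ (CARD('d) + 1) * (K ^ CARD('d) * t / real k ^ (CARD('d) + 1))
        = 4 ^ (CARD('d) + 1) * K ^ CARD('d) * t / real k ^ (CARD('d) + 1)"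
      by (simp add: mult.assoc)
    show ?thesis unfolding ve fe e3[symmetric] by (rule power_mult_distrib[symmetric])
  qed
  finally have Fb: "measure M F \<le> (4 ^ (CARD('d) + 1) * K ^ CARD('d) * t / real k ^ (CARD('d) + 1)) ^ k" .
  have sub: "{\<omega>\<in>space M. \<exists>ps. length ps = k \<and> sorted_wrt st_less ps \<and>
            set ps \<subseteq> Xi \<omega> \<inter> brick a (\<chi> i. a$i + K) 0 t} \<subseteq> F"
  proof
    fix \<omega> assume "\<omega> \<in> {\<omega>\<in>space M. \<exists>ps. length ps = k \<and> sorted_wrt st_less ps \<and>
            set ps \<subseteq> Xi \<omega> \<inter> brick a (\<chi> i. a$i + K) 0 t}"
    then obtain ps where \<omega>: "\<omega> \<in> space M" and len: "length ps = k" and srt: "sorted_wrt st_less ps"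
      and sps: "set ps \<subseteq> Xi \<omega> \<inter> brick a (\<chi> i. a$i + K) 0 t" by blast
    let ?c = "cellidx a h \<tau>"
    define cs where "cs = map ?c ps"
    have bc: "?c p \<in> Idx k \<and> p \<in> cell a h \<tau> (?c p)" if "p \<in> set ps" for p
      using box_cell[OF K t k, of p a] that sps unfolding h_def \<tau>_def by blast
    have dps: "distinct ps"
      by (rule sorted_wrt_irrefl_distinct[OF srt]) (simp add: st_less_def)
    have csS: "cs \<in> Seqs k"
    proof -
      have "set cs \<subseteq> Idx k" using bc by (auto simp: cs_def)
      moreover have "sorted (map (\<lambda>f. f r) cs)" for r
      proof -
        have "sorted_wrt (\<lambda>p q. ?c p r \<le> ?c q r) ps"
          by (rule sorted_wrt_mono_rel[OF _ srt]) (rule cellidx_mono[OF h \<tau>])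
        then show ?thesis by (simp add: cs_def sorted_wrt_map)
      qed
      ultimately show ?thesis using len by (simp add: Seqs_def cs_def)
    qed
    have "\<omega> \<in> G cs"
      unfolding G_def
    proof (rule INT_I)
      fix f assume f: "f \<in> set cs"
      let ?Q = "set (filter (\<lambda>p. ?c p = f) ps)"
      have "count_list cs f = length (filter (\<lambda>p. ?c p = f) ps)"
        by (simp add: cs_def count_list_map_filter)
      also have "\<dots> = card ?Q"
        by (rule distinct_card[OF distinct_filter[OF dps], symmetric])
      also have "\<dots> \<le> card (Xi \<omega> \<inter> cell a h \<tau> f)"
      proof (rule card_mono)
        show "finite (Xi \<omega> \<inter> cell a h \<tau> f)" by (rule pp_finite[OF pp cell_good[OF \<tau>] \<omega>])
        show "?Q \<subseteq> Xi \<omega> \<inter> cell a h \<tau> f"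
        proof
          fix p assume "p \<in> ?Q"
          then have p: "p \<in> set ps" "?c p = f" by auto
          then show "p \<in> Xi \<omega> \<inter> cell a h \<tau> f" using bc[OF p(1)] sps by auto
        qed
      qed
      finally show "\<omega> \<in> {\<omega>\<in>space M. count_list cs f \<le> card (Xi \<omega> \<inter> cell a h \<tau> f)}"
        using \<omega> by simp
    qed
    then show "\<omega> \<in> F" unfolding F_def using csS by blast
  qed
  show ?thesis using Fm sub Fb by blast
qed
lemma sup_norm_ge: "\<bar>v $ i\<bar> \<le> sup_norm (v::real^'d::finite)"
  unfolding sup_norm_def by (rule Max_ge) auto

lemma Hpass_chain:
  assumes fin: "finite (P \<inter> R)"
    and m: "m \<le> Max {length ps | ps. sorted_wrt st_less ps \<and> set ps \<subseteq> P \<inter> R}"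
  shows "\<exists>ps. length ps = m \<and> sorted_wrt st_less ps \<and> set ps \<subseteq> P \<inter> R"
proof -
  let ?S = "{length ps | ps. sorted_wrt st_less ps \<and> set ps \<subseteq> P \<inter> R}"
  have irr: "\<not> st_less p p" for p :: "(real^'a) \<times> real" by (simp add: st_less_def)
  have sub: "?S \<subseteq> {0..card (P \<inter> R)}"
  proof
    fix n assume "n \<in> ?S"
    then have "\<exists>ps. n = length ps \<and> sorted_wrt st_less ps \<and> set ps \<subseteq> P \<inter> R" by (simp only: mem_Collect_eq)
    then obtain ps where ps: "n = length ps" "sorted_wrt st_less ps" "set ps \<subseteq> P \<inter> R" by (elim exE conjE)
    have "length ps = card (set ps)" using sorted_wrt_irrefl_distinct[OF ps(2) irr] by (simp add: distinct_card)
    also have "\<dots> \<le> card (P \<inter> R)" by (rule card_mono[OF fin ps(3)])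
    finally show "n \<in> {0..card (P \<inter> R)}" using ps(1) by simp
  qed
  have finS: "finite ?S" by (rule finite_subset[OF sub]) simp
  have "0 \<in> ?S" by (rule CollectI, rule exI[of _ "[]"]) simp
  have ne: "?S \<noteq> {}"
  proof
    assume "?S = {}"
    with \<open>0 \<in> ?S\<close> show False by (simp only: empty_iff)
  qed
  then have "Max ?S \<in> ?S" by (rule Max_in[OF finS])
  then have "\<exists>ps. Max ?S = length ps \<and> sorted_wrt st_less ps \<and> set ps \<subseteq> P \<inter> R" by (simp only: mem_Collect_eq)
  then obtain ps where ps: "Max ?S = length ps" "sorted_wrt st_less ps" "set ps \<subseteq> P \<inter> R" by (elim exE conjE)
  show ?thesis
  proof (intro exI conjI)
    show "length (take m ps) = m" using ps(1) m by simp
    show "sorted_wrt st_less (take m ps)" using ps(2) by simp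
    show "set (take m ps) \<subseteq> P \<inter> R" using ps(3) set_take_subset[of m ps] by (rule order_trans[rotated])
  qed
qed

lemma ratio_lim:
  fixes q q' :: real and D :: nat
  assumes "0 < q" "q < q'"
  shows "\<exists>K0. \<forall>K\<ge>K0. q * (K / (K - 2)) ^ D \<le> q'"
proof -
  have lim: "((\<lambda>K::real. (K / (K - 2)) ^ D) \<longlongrightarrow> 1) at_top" by real_asymp
  have "1 < q' / q" using assms by simp
  then have "eventually (\<lambda>K. (K / (K - 2)) ^ D < q' / q) at_top"
    by (rule order_tendstoD(2)[OF lim])
  then obtain K0 where K0: "\<forall>K\<ge>K0. (K / (K - 2)) ^ D < q' / q"
    by (auto simp: eventually_at_top_linorder)
  show ?thesis
  proof (intro exI allI impI)
    fix K assume "K0 \<le> K"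
    then have "(K / (K - 2)) ^ D < q' / q" using K0 by simp
    then show "q * (K / (K - 2)) ^ D \<le> q'" using assms by (simp add: field_simps)
  qed
qed

lemma summable_hh:
  fixes \<alpha> c \<gamma> :: real and D :: nat
  assumes "\<alpha> > 0" "c > 0" "\<gamma> > 0"
  shows "summable (\<lambda>n::nat. (2 * real n / \<alpha> + 5) ^ D * exp (- c * (real n - 2) powr \<gamma>))"
proof -
  let ?f = "\<lambda>x::real. (2 * x / \<alpha> + 5) ^ D * exp (- c * (x - 2) powr \<gamma>)"
  have lim: "((\<lambda>x. ?f x * x ^ 2) \<longlongrightarrow> 0) at_top"
    using assms by real_asymp
  have ev: "eventually (\<lambda>x. ?f x * x ^ 2 < 1 \<and> x > 0) at_top"
    by (rule eventually_conj[OF order_tendstoD(2)[OF lim zero_less_one] eventually_gt_at_top])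
  have ev2: "eventually (\<lambda>n::nat. ?f (real n) * (real n) ^ 2 < 1 \<and> real n > 0) sequentially"
    by (rule eventually_compose_filterlim[OF ev filterlim_real_sequentially])
  have ev3: "eventually (\<lambda>n::nat. norm (?f (real n)) \<le> inverse (real n ^ 2)) sequentially"
  proof (rule eventually_mono[OF ev2])
    fix n :: nat assume n: "?f (real n) * (real n) ^ 2 < 1 \<and> real n > 0"
    have f0: "?f (real n) \<ge> 0" using assms by (intro mult_nonneg_nonneg zero_le_power) (simp_all add: divide_nonneg_pos)
    have p: "0 < real n ^ 2" using n by simp
    have n1: "?f (real n) * (real n) ^ 2 < 1" using n by blast
    have "?f (real n) < 1 / (real n) ^ 2" by (rule iffD2[OF pos_less_divide_eq[OF p] n1])
    then have "?f (real n) \<le> inverse (real n ^ 2)" by (simp add: inverse_eq_divide)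
    then show "norm (?f (real n)) \<le> inverse (real n ^ 2)" using f0 by simp
  qed
  show ?thesis
    by (rule summable_comparison_test_ev[OF ev3 inverse_power_summable]) simp
qed


lemma perK_bound:
  fixes M :: "'w measure" and Xi :: "'w \<Rightarrow> ((real ^ 'd::finite) \<times> real) set"
    and a :: "real^'d" and K t \<beta> q' K0 :: real
  assumes pp: "poisson_process M Xi" and t: "t > 0" and \<beta>: "\<beta> > 0"
    and q': "0 < q'" "q' < 1"
    and K0: "\<forall>K\<ge>K0. (4 ^ (CARD('d) + 1) * t / \<beta> ^ (CARD('d) + 1)) * (K / (K - 2)) ^ CARD('d) \<le> q'"
    and K: "K \<ge> K0" "K \<ge> 4"
  shows "\<exists>F\<in>sets M. {\<omega>\<in>space M. \<exists>ps. length ps = nat \<lceil>\<beta> * (K - 2) powr (real CARD('d) / (real CARD('d) + 1))\<rceil> \<and>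
            sorted_wrt st_less ps \<and> set ps \<subseteq> Xi \<omega> \<inter> brick a (\<chi> i. a$i + K) 0 t} \<subseteq> F \<and>
         measure M F \<le> exp (- (- \<beta> * ln q') * (K - 2) powr (real CARD('d) / (real CARD('d) + 1)))"
proof -
  let ?D = "CARD('d)"
  define \<gamma> where "\<gamma> = real ?D / (real ?D + 1)"
  define X where "X = (K - 2) powr \<gamma>"
  define k where "k = nat \<lceil>\<beta> * X\<rceil>"
  have K2: "K - 2 > 0" using K by simp
  have X0: "X > 0" using K2 by (simp add: X_def)
  have bX: "\<beta> * X > 0" using \<beta> X0 by simp
  have kge: "real k \<ge> \<beta> * X"
    unfolding k_def using bX by linarith
  have k1: "k \<ge> 1"
  proof -
    have "real k > 0" using kge bX by linarith
    then show ?thesis by simp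
  qed
  have Kp: "K > 0" using K by simp
  obtain F where F: "F \<in> sets M"
    "{\<omega>\<in>space M. \<exists>ps. length ps = k \<and> sorted_wrt st_less ps \<and> set ps \<subseteq> Xi \<omega> \<inter> brick a (\<chi> i. a$i + K) 0 t} \<subseteq> F"
    "measure M F \<le> (4 ^ (?D + 1) * K ^ ?D * t / real k ^ (?D + 1)) ^ k"
    using chain_event_bound[OF pp Kp k1 t, of a] by blast
  define B where "B = 4 ^ (?D + 1) * K ^ ?D * t / real k ^ (?D + 1)"
  have XD: "X ^ (?D + 1) = (K - 2) ^ ?D"
  proof -
    have "X ^ (?D + 1) = X powr (real (?D + 1))" by (rule powr_realpow[OF X0, symmetric])
    also have "\<dots> = (K - 2) powr (\<gamma> * real (?D + 1))" unfolding X_def by (rule powr_powr)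
    also have "\<gamma> * real (?D + 1) = real ?D" unfolding \<gamma>_def by (simp add: field_simps)
    also have "(K - 2) powr real ?D = (K - 2) ^ ?D" by (rule powr_realpow[OF K2])
    finally show ?thesis .
  qed
  have kD: "real k ^ (?D + 1) \<ge> \<beta> ^ (?D + 1) * (K - 2) ^ ?D"
  proof -
    have "(\<beta> * X) ^ (?D + 1) \<le> real k ^ (?D + 1)"
      by (rule power_mono[OF kge]) (use bX in simp)
    then show ?thesis by (simp only: power_mult_distrib XD)
  qed
  have B0: "B \<ge> 0" unfolding B_def using Kp t by simp
  have Bq: "B \<le> q'"
  proof -
    have pos1: "\<beta> ^ (?D + 1) * (K - 2) ^ ?D > 0" using \<beta> K2 by simp
    have "B \<le> 4 ^ (?D + 1) * K ^ ?D * t / (\<beta> ^ (?D + 1) * (K - 2) ^ ?D)"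
    proof (unfold B_def, rule divide_left_mono[OF kD])
      show "0 \<le> 4 ^ (?D + 1) * K ^ ?D * t" using Kp t by simp
      have "real k ^ (?D + 1) > 0" using k1 by simp
      then show "0 < real k ^ (?D + 1) * (\<beta> ^ (?D + 1) * (K - 2) ^ ?D)" using pos1 by (rule mult_pos_pos)
    qed
    also have "\<dots> = (4 ^ (?D + 1) * t / \<beta> ^ (?D + 1)) * (K / (K - 2)) ^ ?D"
      using \<beta> K2 by (simp add: power_divide field_simps)
    also have "\<dots> \<le> q'" using K0 K(1) by blast
    finally show ?thesis .
  qed
  have "B ^ k \<le> q' ^ k" by (rule power_mono[OF Bq B0])
  also have "q' ^ k = q' powr (real k)" using q' by (simp add: powr_realpow)
  also have "\<dots> \<le> q' powr (\<beta> * X)" by (rule powr_mono'[OF kge]) (use q' in simp_all)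
  also have "\<dots> = exp (- (- \<beta> * ln q') * X)" using q' by (simp add: powr_def)
  finally have "B ^ k \<le> exp (- (- \<beta> * ln q') * X)" .
  then have "measure M F \<le> exp (- (- \<beta> * ln q') * X)" using F(3) unfolding B_def by linarith
  then show ?thesis using F(1,2) unfolding k_def X_def \<gamma>_def by blast
qed

lemma region_brick:
  "{(\<eta>, s). sp_less y \<eta> \<and> \<eta> \<le> x \<and> 0 < s \<and> s \<le> t} = brick (y::real^'d::finite) x 0 t"
  unfolding brick_def sp_less_def less_eq_vec_def by auto

lemma four_lt_exp2: "4 < exp (2::real)"
  using exp_lower_Taylor_quadratic[of 2] by simp

theorem lemma7p5:
  fixes M :: "'w measure" and Xi :: "'w \<Rightarrow> ((real ^ 'd::finite) \<times> real) set"
    and t \<alpha> \<beta> :: real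
  assumes "CARD('d) \<ge> 2"
    and "poisson_process M Xi"
    and "t > 0" and "0 < \<alpha>" and "\<alpha> < 1/2"
    and "\<beta> > exp 2 * t powr (1 / (real CARD('d) + 1))"
  shows "\<exists>\<theta>0 C1 C2 :: real. \<theta>0 > 0 \<and> C1 > 0 \<and> C2 > 0 \<and>
    (\<forall>\<theta>\<ge>\<theta>0. \<exists>E\<in>sets M.
       {\<omega>\<in>space M. \<exists>y x :: real ^ 'd. sp_less y x \<and> sup_norm y \<ge> \<theta> \<and>
           sup_norm (x - y) \<ge> \<alpha> * sup_norm y \<and>
           real (Hpass (Xi \<omega>) y x t) \<ge>
             \<beta> * sup_norm (x - y) powr (real CARD('d) / (real CARD('d) + 1))} \<subseteq> E \<and>
       measure M E \<le> C1 * exp (- C2 * \<theta> powr (real CARD('d) / (real CARD('d) + 1))))"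
proof -
  note pp = assms(2)
  have t: "t > 0" and \<alpha>: "\<alpha> > 0" using assms by auto
  interpret prob_space M using pp by (rule pp_prob_space)
  let ?D = "CARD('d)"
  define \<gamma> where "\<gamma> = real ?D / (real ?D + 1)"
  have \<gamma>0: "\<gamma> > 0" unfolding \<gamma>_def by simp
  have tp: "t powr (1 / (real ?D + 1)) > 0" using t by simp
  have \<beta>: "\<beta> > 0" using assms(6) tp by (smt (verit) exp_gt_zero mult_pos_pos)
  have tpow: "(t powr (1 / (real ?D + 1))) ^ (?D + 1) = t"
  proof -
    have "(t powr (1 / (real ?D + 1))) ^ (?D + 1) = (t powr (1 / (real ?D + 1))) powr (real (?D + 1))"
      by (rule powr_realpow[OF tp, symmetric])
    also have "\<dots> = t powr (1 / (real ?D + 1) * real (?D + 1))" by (rule powr_powr)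
    also have "1 / (real ?D + 1) * real (?D + 1) = 1" by simp
    finally show ?thesis using t by simp
  qed
  have bpow: "exp 2 ^ (?D + 1) * t < \<beta> ^ (?D + 1)"
  proof -
    have "(exp 2 * t powr (1 / (real ?D + 1))) ^ (?D + 1) < \<beta> ^ (?D + 1)"
      by (rule power_strict_mono[OF assms(6)]) (use tp in simp_all)
    then show ?thesis by (simp only: power_mult_distrib tpow)
  qed
  define q where "q = 4 ^ (?D + 1) * t / \<beta> ^ (?D + 1)"
  have q0: "q > 0" unfolding q_def using t \<beta> by simp
  have q1: "q < 1"
  proof -
    have "(4::real) ^ (?D + 1) < exp 2 ^ (?D + 1)"
      by (rule power_strict_mono[OF four_lt_exp2]) simp_all
    then have "4 ^ (?D + 1) * t < exp 2 ^ (?D + 1) * t" using t by simp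
    then have "4 ^ (?D + 1) * t < \<beta> ^ (?D + 1)" using bpow by linarith
    then show ?thesis unfolding q_def using \<beta> by simp
  qed
  define q' where "q' = (1 + q) / 2"
  have q'0: "0 < q'" "q < q'" "q' < 1" using q0 q1 by (auto simp: q'_def)
  obtain K0 where K0: "\<forall>K\<ge>K0. q * (K / (K - 2)) ^ ?D \<le> q'"
    using ratio_lim[OF q0 q'0(2)] by blast
  have K0': "\<forall>K\<ge>K0. (4 ^ (?D + 1) * t / \<beta> ^ (?D + 1)) * (K / (K - 2)) ^ ?D \<le> q'"
    using K0 unfolding q_def .
  define K1 where "K1 = max K0 4"
  define c where "c = - \<beta> * ln q'"
  have c0: "c > 0" unfolding c_def using q'0 \<beta> by (simp add: mult_pos_neg)
  define kk where "kk K = nat \<lceil>\<beta> * (real K - 2) powr \<gamma>\<rceil>" for K :: nat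
  define CS where "CS K a = {\<omega>\<in>space M. \<exists>ps. length ps = kk K \<and>
            sorted_wrt st_less ps \<and> set ps \<subseteq> Xi \<omega> \<inter> brick a (\<chi> i. a$i + real K) 0 t}" for K :: nat and a
  define Fa where "Fa K a = (SOME F. F \<in> sets M \<and> CS K a \<subseteq> F \<and>
         measure M F \<le> exp (- c * (real K - 2) powr \<gamma>))" for K :: nat and a
  have Fa: "Fa K a \<in> sets M \<and> CS K a \<subseteq> Fa K a \<and> measure M (Fa K a) \<le> exp (- c * (real K - 2) powr \<gamma>)"
    if "real K \<ge> K1" for K :: nat and a
  proof -
    have "\<exists>F\<in>sets M. CS K a \<subseteq> F \<and> measure M F \<le> exp (- c * (real K - 2) powr \<gamma>)"
      unfolding CS_def kk_def c_def \<gamma>_def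
      by (rule perK_bound[OF pp t \<beta> q'0(1) q'0(3) K0']) (use that in \<open>simp_all add: K1_def\<close>)
    then have "\<exists>F. F \<in> sets M \<and> CS K a \<subseteq> F \<and> measure M F \<le> exp (- c * (real K - 2) powr \<gamma>)" by blast
    then show ?thesis unfolding Fa_def by (rule someI_ex)
  qed
  define R where "R K = \<lceil>real K / \<alpha>\<rceil> + 1" for K :: nat
  define AK where "AK K = (\<lambda>z. \<chi> i. real_of_int (z i)) ` (PiE (UNIV :: 'd set) (\<lambda>_. {- R K..R K}))" for K :: nat
  define EK where "EK K = (\<Union>a\<in>AK K. Fa K a)" for K :: nat
  have AKfin: "finite (AK K)" for K unfolding AK_def by (intro finite_imageI finite_PiE) auto
  have AKcard: "real (card (AK K)) \<le> (2 * real K / \<alpha> + 5) ^ ?D" for K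
  proof -
    have "card (AK K) \<le> card (PiE (UNIV :: 'd set) (\<lambda>_. {- R K..R K}))"
      unfolding AK_def by (rule card_image_le) (rule finite_PiE, simp_all)
    also have "\<dots> = (nat (2 * R K + 1)) ^ ?D" by (simp add: card_PiE)
    finally have "real (card (AK K)) \<le> real (nat (2 * R K + 1)) ^ ?D"
      by (metis of_nat_le_iff of_nat_power)
    also have "\<dots> \<le> (2 * real K / \<alpha> + 5) ^ ?D"
    proof (rule power_mono)
      have d0: "0 \<le> real K / \<alpha>" using \<alpha> by simp
      then have "-1 < real K / \<alpha>" by linarith
      then have "0 \<le> \<lceil>real K / \<alpha>\<rceil>" by simp
      then have R0: "R K \<ge> 1" unfolding R_def by simp
      have "real_of_int \<lceil>real K / \<alpha>\<rceil> < real K / \<alpha> + 1" by linarith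
      then have "real_of_int (R K) < real K / \<alpha> + 2" unfolding R_def by simp
      moreover have "real (nat (2 * R K + 1)) = 2 * real_of_int (R K) + 1" using R0 by simp
      ultimately show "real (nat (2 * R K + 1)) \<le> 2 * real K / \<alpha> + 5" by simp
    qed simp
    finally show ?thesis .
  qed
  define hh where "hh n = (2 * real n / \<alpha> + 5) ^ ?D * exp (- (c/2) * (real n - 2) powr \<gamma>)" for n :: nat
  have hh0: "hh n \<ge> 0" for n
    unfolding hh_def using \<alpha> by (intro mult_nonneg_nonneg zero_le_power) (simp_all add: divide_nonneg_pos)
  have hhs: "summable hh"
    unfolding hh_def using summable_hh[OF \<alpha> _ \<gamma>0, of "c/2" ?D] c0 by simp
  define \<theta>0 where "\<theta>0 = K1 / \<alpha> + 1"
  define C1 where "C1 = suminf hh + 1"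
  define C2 where "C2 = (c / 2) * (\<alpha> / 2) powr \<gamma>"
  have K14: "K1 \<ge> 4" unfolding K1_def by simp
  have \<theta>00: "\<theta>0 > 0" unfolding \<theta>0_def using K14 \<alpha> by (simp add: add_pos_nonneg divide_nonneg_pos)
  have C10: "C1 > 0" unfolding C1_def using suminf_nonneg[OF hhs hh0] by simp
  have C20: "C2 > 0" unfolding C2_def using c0 \<alpha> by simp
  have main: "\<exists>E\<in>sets M.
       {\<omega>\<in>space M. \<exists>y x :: real ^ 'd. sp_less y x \<and> sup_norm y \<ge> \<theta> \<and>
           sup_norm (x - y) \<ge> \<alpha> * sup_norm y \<and>
           real (Hpass (Xi \<omega>) y x t) \<ge> \<beta> * sup_norm (x - y) powr \<gamma>} \<subseteq> E \<and>
       measure M E \<le> C1 * exp (- C2 * \<theta> powr \<gamma>)" if \<theta>: "\<theta> \<ge> \<theta>0" for \<theta>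
  proof -
    have a\<theta>: "\<alpha> * \<theta> \<ge> K1 + \<alpha>"
    proof -
      have "\<alpha> * \<theta> \<ge> \<alpha> * \<theta>0" using \<theta> \<alpha> by simp
      also have "\<alpha> * \<theta>0 = K1 + \<alpha>" unfolding \<theta>0_def using \<alpha> by (simp add: field_simps)
      finally show ?thesis .
    qed
    define Ek where "Ek K = (if \<alpha> * \<theta> \<le> real K then EK K else {})" for K :: nat
    define E where "E = (\<Union>K. Ek K)"
    have Kbig: "real K \<ge> K1" if "\<alpha> * \<theta> \<le> real K" for K :: nat using that a\<theta> \<alpha> by linarith
    have Ekm: "Ek K \<in> sets M" for K
    proof (cases "\<alpha> * \<theta> \<le> real K")
      case True
      have "EK K \<in> sets M" unfolding EK_def
        by (rule sets.finite_UN[OF AKfin]) (use Fa[OF Kbig[OF True]] in blast)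
      then show ?thesis using True by (simp add: Ek_def)
    qed (simp add: Ek_def)
    have Em: "E \<in> sets M" unfolding E_def by (rule sets.countable_UN) (use Ekm in blast)
    define z where "z = exp (- C2 * \<theta> powr \<gamma>)"
    have z0: "z \<ge> 0" unfolding z_def by simp
    have Ekb: "measure M (Ek K) \<le> z * hh K" for K
    proof (cases "\<alpha> * \<theta> \<le> real K")
      case False
      then show ?thesis using z0 hh0[of K] by (simp add: Ek_def)
    next
      case True
      have KK1: "real K \<ge> K1" by (rule Kbig[OF True])
      have K4: "real K \<ge> 4" using KK1 K14 by linarith
      define X where "X = (real K - 2) powr \<gamma>"
      have "measure M (EK K) \<le> (\<Sum>a\<in>AK K. measure M (Fa K a))"
        unfolding EK_def by (rule finite_measure_subadditive_finite[OF AKfin]) (use Fa[OF KK1] in blast)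
      also have "\<dots> \<le> (\<Sum>a\<in>AK K. exp (- c * X))"
        by (rule sum_mono) (use Fa[OF KK1] in \<open>simp add: X_def\<close>)
      also have "\<dots> = real (card (AK K)) * exp (- c * X)" by simp
      also have "\<dots> \<le> (2 * real K / \<alpha> + 5) ^ ?D * exp (- c * X)"
        by (rule mult_right_mono[OF AKcard]) simp
      also have "\<dots> = (2 * real K / \<alpha> + 5) ^ ?D * exp (- (c/2) * X) * exp (- (c/2) * X)"
        by (simp add: mult.assoc exp_add[symmetric])
      also have "\<dots> \<le> (2 * real K / \<alpha> + 5) ^ ?D * exp (- (c/2) * X) * z"
      proof (rule mult_left_mono)
        have "(\<alpha> * \<theta> / 2) powr \<gamma> \<le> X"
          unfolding X_def
        proof (rule powr_mono2)
          show "0 \<le> \<gamma>" using \<gamma>0 by simp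
          have "0 \<le> \<alpha> * \<theta>" using a\<theta> K14 \<alpha> by linarith
          then show "0 \<le> \<alpha> * \<theta> / 2" by simp
          show "\<alpha> * \<theta> / 2 \<le> real K - 2" using True K4 by simp
        qed
        moreover have "(\<alpha> * \<theta> / 2) powr \<gamma> = (\<alpha> / 2) powr \<gamma> * \<theta> powr \<gamma>"
        proof -
          have "\<alpha> * \<theta> / 2 = (\<alpha> / 2) * \<theta>" by simp
          moreover have "\<theta> \<ge> 0" using \<theta> \<theta>00 by simp
          ultimately show ?thesis using \<alpha> powr_mult[of "\<alpha> / 2" \<theta> \<gamma>] by simp
        qed
        ultimately have "C2 * \<theta> powr \<gamma> \<le> (c / 2) * X"
          unfolding C2_def using c0 by (simp add: mult.assoc mult_left_mono)
        then show "exp (- (c/2) * X) \<le> z" unfolding z_def by simp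
      next
        show "0 \<le> (2 * real K / \<alpha> + 5) ^ ?D * exp (- (c/2) * X)"
          using \<alpha> by (intro mult_nonneg_nonneg zero_le_power) (simp_all add: divide_nonneg_pos)
      qed
      also have "\<dots> = z * hh K" unfolding hh_def X_def by simp
      finally show ?thesis using True by (simp add: Ek_def)
    qed
    have Ek0: "measure M (Ek K) \<ge> 0" for K by simp
    have sumEk: "summable (\<lambda>K. measure M (Ek K))"
      by (rule summable_comparison_test_ev[OF _ summable_mult[OF hhs, of z]]) (use Ekb in simp)
    have "measure M E \<le> (\<Sum>K. measure M (Ek K))"
      unfolding E_def by (rule finite_measure_subadditive_countably[OF _ sumEk]) (use Ekm in blast)
    also have "\<dots> \<le> (\<Sum>K. z * hh K)"
      by (rule suminf_le[OF Ekb sumEk summable_mult[OF hhs]])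
    also have "\<dots> = z * suminf hh" by (rule suminf_mult[OF hhs])
    also have "\<dots> \<le> z * C1" unfolding C1_def by (rule mult_left_mono) (simp_all add: z0)
    finally have Eb: "measure M E \<le> C1 * exp (- C2 * \<theta> powr \<gamma>)" unfolding z_def by (simp add: mult.commute)
    have sub: "{\<omega>\<in>space M. \<exists>y x :: real ^ 'd. sp_less y x \<and> sup_norm y \<ge> \<theta> \<and>
           sup_norm (x - y) \<ge> \<alpha> * sup_norm y \<and>
           real (Hpass (Xi \<omega>) y x t) \<ge> \<beta> * sup_norm (x - y) powr \<gamma>} \<subseteq> E"
    proof
      fix \<omega> assume "\<omega> \<in> {\<omega>\<in>space M. \<exists>y x :: real ^ 'd. sp_less y x \<and> sup_norm y \<ge> \<theta> \<and>
           sup_norm (x - y) \<ge> \<alpha> * sup_norm y \<and>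
           real (Hpass (Xi \<omega>) y x t) \<ge> \<beta> * sup_norm (x - y) powr \<gamma>}"
      then obtain y x :: "real^'d" where \<omega>: "\<omega> \<in> space M" and yx: "sp_less y x" and y\<theta>: "sup_norm y \<ge> \<theta>"
        and Ly: "sup_norm (x - y) \<ge> \<alpha> * sup_norm y"
        and H: "real (Hpass (Xi \<omega>) y x t) \<ge> \<beta> * sup_norm (x - y) powr \<gamma>" by blast
      define L where "L = sup_norm (x - y)"
      have L0: "L > 0"
      proof -
        have "\<bar>(x - y) $ undefined\<bar> \<le> L" unfolding L_def by (rule sup_norm_ge)
        moreover have "y $ undefined < x $ undefined" using yx by (simp add: sp_less_def)
        ultimately show ?thesis by simp
      qed
      define K where "K = nat \<lceil>L\<rceil> + 1"
      have cL: "\<lceil>L\<rceil> \<ge> 1" using L0 by linarith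
      have rK: "real K = real_of_int \<lceil>L\<rceil> + 1" unfolding K_def using cL by simp
      have KL1: "L + 1 \<le> real K" "real K - 2 < L" unfolding rK by linarith+
      have yL: "sup_norm y \<le> L / \<alpha>" using Ly \<alpha> unfolding L_def by (simp add: field_simps)
      have KT: "\<alpha> * \<theta> \<le> real K"
      proof -
        have "\<alpha> * \<theta> \<le> \<alpha> * sup_norm y" using y\<theta> \<alpha> by simp
        then show ?thesis using Ly KL1 unfolding L_def by linarith
      qed
      have KK1: "real K \<ge> K1" by (rule Kbig[OF KT])
      have K4: "real K \<ge> 4" using KK1 K14 by linarith
      define a where "a = (\<chi> i. real_of_int \<lfloor>y $ i\<rfloor>)"
      have aK: "a \<in> AK K"
      proof -
        have "(\<lambda>i. \<lfloor>y $ i\<rfloor>) \<in> PiE (UNIV :: 'd set) (\<lambda>_. {- R K..R K})"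
        proof (rule PiE_I)
          fix i :: 'd
          have yi: "\<bar>y $ i\<bar> \<le> real K / \<alpha>"
          proof -
            have "\<bar>y $ i\<bar> \<le> sup_norm y" by (rule sup_norm_ge)
            also have "\<dots> \<le> L / \<alpha>" by (rule yL)
            also have "\<dots> \<le> real K / \<alpha>" using KL1 \<alpha> by (simp add: divide_right_mono)
            finally show ?thesis .
          qed
          have c1: "real K / \<alpha> \<le> real_of_int \<lceil>real K / \<alpha>\<rceil>" by (rule le_of_int_ceiling)
          have "real_of_int (- R K) \<le> real_of_int \<lfloor>y $ i\<rfloor>"
            unfolding R_def using yi c1 by linarith
          moreover have "real_of_int \<lfloor>y $ i\<rfloor> \<le> real_of_int (R K)"
            unfolding R_def using yi c1 by linarith
          ultimately show "\<lfloor>y $ i\<rfloor> \<in> {- R K..R K}" by (simp only: of_int_le_iff atLeastAtMost_iff)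
        qed simp
        then show ?thesis unfolding AK_def a_def by (rule imageI)
      qed
      have reg: "{(\<eta>, s). sp_less y \<eta> \<and> \<eta> \<le> x \<and> 0 < s \<and> s \<le> t} = brick y x 0 t" by (rule region_brick)
      have fin: "finite (Xi \<omega> \<inter> {(\<eta>, s). sp_less y \<eta> \<and> \<eta> \<le> x \<and> 0 < s \<and> s \<le> t})"
        unfolding reg by (rule pp_finite[OF pp brick_good \<omega>]) simp
      have kH: "kk K \<le> Hpass (Xi \<omega>) y x t"
      proof -
        have "(real K - 2) powr \<gamma> \<le> L powr \<gamma>"
          by (rule powr_mono2) (use \<gamma>0 K4 KL1 in simp_all)
        then have "\<beta> * (real K - 2) powr \<gamma> \<le> real (Hpass (Xi \<omega>) y x t)"
          using H \<beta> unfolding L_def by (smt (verit) mult_left_mono)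
        then have "\<beta> * (real K - 2) powr \<gamma> \<le> real_of_int (int (Hpass (Xi \<omega>) y x t))"
          by simp
        then have "\<lceil>\<beta> * (real K - 2) powr \<gamma>\<rceil> \<le> int (Hpass (Xi \<omega>) y x t)"
          by (simp only: ceiling_le_iff)
        then show ?thesis unfolding kk_def by (simp only: nat_le_iff)
      qed
      obtain ps where ps: "length ps = kk K" "sorted_wrt st_less ps"
        "set ps \<subseteq> Xi \<omega> \<inter> {(\<eta>, s). sp_less y \<eta> \<and> \<eta> \<le> x \<and> 0 < s \<and> s \<le> t}"
        using Hpass_chain[OF fin, of "kk K"] kH unfolding Hpass_def by blast
      have boxsub: "brick y x 0 t \<subseteq> brick a (\<chi> i. a$i + real K) 0 t"
      proof
        fix p assume p: "p \<in> brick y x 0 t"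
        have "a $ i < fst p $ i \<and> fst p $ i \<le> (\<chi> i. a$i + real K) $ i" for i
        proof -
          have p1: "y $ i < fst p $ i" "fst p $ i \<le> x $ i" using p by (simp_all add: brick_def)
          have ai: "a $ i = real_of_int \<lfloor>y $ i\<rfloor>" by (simp add: a_def)
          have f1: "real_of_int \<lfloor>y $ i\<rfloor> \<le> y $ i" by (rule of_int_floor_le)
          have f2: "y $ i < real_of_int \<lfloor>y $ i\<rfloor> + 1" by (rule real_of_int_floor_add_one_gt)
          have "\<bar>(x - y) $ i\<bar> \<le> L" unfolding L_def by (rule sup_norm_ge)
          then have xyL: "x $ i - y $ i \<le> L" by simp
          have e: "(\<chi> i. a$i + real K) $ i = a $ i + real K" by simp
          show ?thesis unfolding e using p1 ai f1 f2 KL1 xyL by (intro conjI) linarith+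
        qed
        then show "p \<in> brick a (\<chi> i. a$i + real K) 0 t" using p by (simp add: brick_def)
      qed
      have "\<omega> \<in> CS K a"
        unfolding CS_def using \<omega> ps boxsub reg by blast
      then have "\<omega> \<in> Fa K a" using Fa[OF KK1] by blast
      then have "\<omega> \<in> EK K" unfolding EK_def using aK by blast
      then have "\<omega> \<in> Ek K" unfolding Ek_def using KT by simp
      then show "\<omega> \<in> E" unfolding E_def by blast
    qed
    show ?thesis using Em sub Eb by blast
  qed
  have "\<forall>\<theta>\<ge>\<theta>0. \<exists>E\<in>sets M.
       {\<omega>\<in>space M. \<exists>y x :: real ^ 'd. sp_less y x \<and> sup_norm y \<ge> \<theta> \<and>
           sup_norm (x - y) \<ge> \<alpha> * sup_norm y \<and>
           real (Hpass (Xi \<omega>) y x t) \<ge> \<beta> * sup_norm (x - y) powr \<gamma>} \<subseteq> E \<and>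
       measure M E \<le> C1 * exp (- C2 * \<theta> powr \<gamma>)" using main by blast
  then show ?thesis unfolding \<gamma>_def using \<theta>00 C10 C20 by blast
qed
end
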